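(* Let $\mathrm{SG}(n)$ denote the Sprague--Grundy value of a pile of $n$ tokens in the game $i\textsc{-Mark}(\{1\},\{2,3\})$. For every integer $n>1$ there exists an integer $i$ with $1\le i\le 10$ and $i\le n$ such that $\mathrm{SG}(n-i)=1$.
   Context: In the impartial game $i\textsc{-Mark}(\{1\},\{2,3\})$, played on a single pile of $n\ge0$ tokens, a move replaces $n$ by $n-1$ (if $n\ge 1$), or by $n/2$ if $n>0$ is even, or by $n/3$ if $n>0$ is divisible by $3$. The Sprague--Grundy value is defined recursively by $\mathrm{SG}(n)=\mathrm{mex}\{\mathrm{SG}(w): w \text{ an option of } n\}$, where $\mathrm{mex}(T)$ is the smallest nonnegative integer not in $T$. *)

theory Defs
  imports Main
begin

definition mex :: "nat set \<Rightarrow> nat" where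
  "mex T = (LEAST m. m \<notin> T)"

definition opts :: "nat \<Rightarrow> nat set" where
  "opts n = {w. (n \<ge> 1 \<and> w = n - 1) \<or> (n > 0 \<and> 2 dvd n \<and> w = n div 2)
                \<or> (n > 0 \<and> 3 dvd n \<and> w = n div 3)}"

lemma opts_less: "w \<in> opts n \<Longrightarrow> w < n"
  unfolding opts_def by auto

function SG :: "nat \<Rightarrow> nat" where
  "SG n = mex ((\<lambda>w. if w < n then SG w else 0) ` opts n)"
  by auto
termination by (relation "measure id") auto

declare SG.simps[simp del]

lemma SG_eq: "SG n = mex (SG ` opts n)"
proof -
  have "(\<lambda>w. if w < n then SG w else 0) ` opts n = SG ` opts n"
    using opts_less by (auto intro!: image_cong)
  then show ?thesis by (subst SG.simps) simp
qed

end

theory Submission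
  imports Defs
begin

lemma opts_fin: "finite (opts n)"
  by (rule finite_subset[of _ "{..<n}"]) (auto dest: opts_less)

lemma SG_notin: "SG n \<notin> SG ` opts n"
proof -
  have "\<exists>m. m \<notin> SG ` opts n"
    using opts_fin ex_new_if_finite[of "SG ` opts n"] by (auto simp: infinite_UNIV_nat)
  then show ?thesis unfolding SG_eq[of n] mex_def by (rule LeastI_ex)
qed

lemma SG_below: "m < SG n \<Longrightarrow> m \<in> SG ` opts n"
  unfolding SG_eq[of n] mex_def using not_less_Least by blast

lemma opts1: "opts (6*k+1) = {6*k}"
proof -
  have "\<not> 2 dvd (6*k+1)" "\<not> 3 dvd (6*k+1)" by presburger+
  then show ?thesis unfolding opts_def by auto
qed
lemma opts5: "opts (6*k+5) = {6*k+4}"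
proof -
  have "\<not> 2 dvd (6*k+5)" "\<not> 3 dvd (6*k+5)" by presburger+
  then show ?thesis unfolding opts_def by auto
qed
lemma opts2: "opts (6*k+2) = {6*k+1, 3*k+1}"
proof -
  have "2 dvd (6*k+2)" "\<not> 3 dvd (6*k+2)" "(6*k+2) div 2 = 3*k+1" by presburger+
  then show ?thesis unfolding opts_def by auto
qed
lemma opts4: "opts (6*k+4) = {6*k+3, 3*k+2}"
proof -
  have "2 dvd (6*k+4)" "\<not> 3 dvd (6*k+4)" "(6*k+4) div 2 = 3*k+2" by presburger+
  then show ?thesis unfolding opts_def by auto
qed
lemma opts32: "3*k+1 \<in> opts (3*k+2)"
  unfolding opts_def by auto

lemma block: "\<exists>t. 6*k+1 \<le> t \<and> t \<le> 6*k+5 \<and> SG t = 1"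
proof (rule ccontr)
  assume "\<not> ?thesis"
  hence ne: "\<And>t. 6*k+1 \<le> t \<Longrightarrow> t \<le> 6*k+5 \<Longrightarrow> SG t \<noteq> 1" by blast
  have i1: "SG ` opts (6*k+1) = {SG (6*k)}" by (simp only: opts1 image_insert image_empty)
  have i5: "SG ` opts (6*k+5) = {SG (6*k+4)}" by (simp only: opts5 image_insert image_empty)
  have i2: "SG ` opts (6*k+2) = {SG (6*k+1), SG (3*k+1)}" by (simp only: opts2 image_insert image_empty)
  have i4: "SG ` opts (6*k+4) = {SG (6*k+3), SG (3*k+2)}" by (simp only: opts4 image_insert image_empty)
  have n1: "SG (6*k+1) \<noteq> 1" "SG (6*k+2) \<noteq> 1" "SG (6*k+3) \<noteq> 1"
    "SG (6*k+4) \<noteq> 1" "SG (6*k+5) \<noteq> 1" by (rule ne; simp)+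
  have a1: "SG (6*k+1) = 0"
  proof (rule ccontr)
    assume "SG (6*k+1) \<noteq> 0"
    with n1(1) have "0 < SG (6*k+1)" "1 < SG (6*k+1)" by linarith+
    from SG_below[OF this(1)] SG_below[OF this(2)] show False unfolding i1 by simp
  qed
  have a5: "SG (6*k+5) = 0"
  proof (rule ccontr)
    assume "SG (6*k+5) \<noteq> 0"
    with n1(5) have "0 < SG (6*k+5)" "1 < SG (6*k+5)" by linarith+
    from SG_below[OF this(1)] SG_below[OF this(2)] show False unfolding i5 by simp
  qed
  have "SG (6*k+4) \<noteq> 0" using SG_notin[of "6*k+5"] a5 unfolding i5 by auto
  with n1(4) have "1 < SG (6*k+4)" by linarith
  from SG_below[OF this] have "1 \<in> {SG (6*k+3), SG (3*k+2)}" unfolding i4 .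
  with n1(3) have b: "SG (3*k+2) = 1" by auto
  have "SG (6*k+2) \<noteq> 0" using SG_notin[of "6*k+2"] a1 unfolding i2 by auto
  with n1(2) have "1 < SG (6*k+2)" by linarith
  from SG_below[OF this] have "1 \<in> {SG (6*k+1), SG (3*k+1)}" unfolding i2 .
  hence "1 = SG (6*k+1) \<or> 1 = SG (3*k+1)" by (simp only: insert_iff empty_iff simp_thms)
  with a1 have c: "SG (3*k+1) = 1" by linarith
  have "1 \<in> SG ` opts (3*k+2)" using opts32[of k] c by (metis image_eqI)
  with SG_notin[of "3*k+2"] b show False by simp
qed

lemma SG0: "SG 0 = 0"
proof -
  have "opts 0 = {}" unfolding opts_def by auto
  then show ?thesis unfolding SG_eq[of 0] mex_def by simp
qed

lemma SG1: "SG 1 = 1"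
proof -
  have "opts 1 = {0}" unfolding opts_def by auto
  then have "SG ` opts 1 = {0}" using SG0 by simp
  then show ?thesis unfolding SG_eq[of 1] mex_def by (auto intro!: Least_equality)
qed

theorem mainTheorem5:
  fixes n :: nat
  assumes "n > 1"
  shows "\<exists>i::nat. 1 \<le> i \<and> i \<le> 10 \<and> i \<le> n \<and> SG (n - i) = 1"
proof (cases "n \<le> 11")
  case True
  have "SG 1 = 1" by (rule SG1)
  then show ?thesis using True assms by (intro exI[of _ "n - 1"]) auto
next
  case False
  define k where "k = (n - 10 + 4) div 6"
  obtain t where t: "6*k+1 \<le> t" "t \<le> 6*k+5" "SG t = 1" using block by blast
  have "n - 10 \<le> 6*k+1" "6*k+5 \<le> n - 1" using False unfolding k_def by auto
  then show ?thesis using t False by (intro exI[of _ "n - t"]) auto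
qed

end
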